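(* Let $A=\mathbb C_w[x,x^{-1},y,y^{-1}]$. For each of the following six choices of elements $x',y'\in A$ and $w'(s,t)\in A$ ($s,t\in\mathbb Z$): (1) $x'=y$, $y'=x$, $w'(s,t)=w(t,s)^{-1}$; (2) $x'=x^{-1}$, $y'=y$, $w'(s,t)=w(1-s,t)^{-1}$; (3) $x'=x^{-1}$, $y'=x^{-1}y$, $w'(s,t)=w(1-s-t,t)^{-1}$; (4) $x'=x$, $y'=y^{-1}$, $w'(s,t)=w(s,1-t)^{-1}$; (5) $x'=x^{-1}$, $y'=y^{-1}$, $w'(s,t)=w(1-s,1-t)$; (6) $x'=y^{-1}x$, $y'=y^{-1}$, $w'(s,t)=w(s,1-s-t)^{-1}$; the elements $x',y',w'(s,t)$ satisfy the defining relations of $A$ with $(x,y,w)$ replaced by $(x',y',w')$, and the assignment $x\mapsto x'$, $y\mapsto y'$, $w(s,t)\mapsto w'(s,t)$ defines an involutive algebra isomorphism.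
   Context: Let $(w(s,t))_{s,t\in\mathbb Z}$ be commuting invertible variables. $\mathbb C_w[x,x^{-1},y,y^{-1}]$ is the associative unital $\mathbb C$-algebra generated by $x,x^{-1},y,y^{-1}$ and the $w(s,t)^{\pm1}$ subject to $x^{-1}x=xx^{-1}=1$, $y^{-1}y=yy^{-1}=1$, $yx=w(1,1)xy$, $x\,w(s,t)=w(s+1,t)\,x$, $y\,w(s,t)=w(s,t+1)\,y$ for all $s,t\in\mathbb Z$. *)

theory Defs
  imports Complex_Main
begin

text \<open>Generators of A: x, x^-1, y, y^-1, w(s,t), w(s,t)^-1.\<close>
datatype gen = X | Xi | Y | Yi | W int int | Wi int int

datatype aexp = Gen gen | Sc complex | Plus aexp aexp | Times aexp aexp

inductive defrel :: "aexp \<Rightarrow> aexp \<Rightarrow> bool" where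
  r_xxi: "defrel (Times (Gen X) (Gen Xi)) (Sc 1)"
| r_xix: "defrel (Times (Gen Xi) (Gen X)) (Sc 1)"
| r_yyi: "defrel (Times (Gen Y) (Gen Yi)) (Sc 1)"
| r_yiy: "defrel (Times (Gen Yi) (Gen Y)) (Sc 1)"
| r_wwi: "defrel (Times (Gen (W s t)) (Gen (Wi s t))) (Sc 1)"
| r_wiw: "defrel (Times (Gen (Wi s t)) (Gen (W s t))) (Sc 1)"
| r_wcomm: "defrel (Times (Gen (W s t)) (Gen (W s' t'))) (Times (Gen (W s' t')) (Gen (W s t)))"
| r_yx: "defrel (Times (Gen Y) (Gen X)) (Times (Gen (W 1 1)) (Times (Gen X) (Gen Y)))"
| r_xw: "defrel (Times (Gen X) (Gen (W s t))) (Times (Gen (W (s + 1) t)) (Gen X))"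
| r_yw: "defrel (Times (Gen Y) (Gen (W s t))) (Times (Gen (W s (t + 1))) (Gen Y))"

text \<open>Equality in A: the least congruence on expressions containing the axioms of
  unital associative C-algebras (scalars central) and the defining relations.
  The quotient of aexp by aeq is exactly A.\<close>
inductive aeq :: "aexp \<Rightarrow> aexp \<Rightarrow> bool" where
  refl: "aeq a a"
| sym: "aeq a b \<Longrightarrow> aeq b a"
| trans: "aeq a b \<Longrightarrow> aeq b c \<Longrightarrow> aeq a c"
| plus_cong: "aeq a a' \<Longrightarrow> aeq b b' \<Longrightarrow> aeq (Plus a b) (Plus a' b')"
| times_cong: "aeq a a' \<Longrightarrow> aeq b b' \<Longrightarrow> aeq (Times a b) (Times a' b')"
| rel: "defrel a b \<Longrightarrow> aeq a b"
| plus_assoc: "aeq (Plus a (Plus b c)) (Plus (Plus a b) c)"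
| plus_comm: "aeq (Plus a b) (Plus b a)"
| plus_zero: "aeq (Plus (Sc 0) a) a"
| plus_neg: "aeq (Plus a (Times (Sc (-1)) a)) (Sc 0)"
| times_assoc: "aeq (Times a (Times b c)) (Times (Times a b) c)"
| times_one_l: "aeq (Times (Sc 1) a) a"
| times_one_r: "aeq (Times a (Sc 1)) a"
| distrib_l: "aeq (Times a (Plus b c)) (Plus (Times a b) (Times a c))"
| distrib_r: "aeq (Times (Plus a b) c) (Plus (Times a c) (Times b c))"
| sc_plus: "aeq (Plus (Sc c) (Sc d)) (Sc (c + d))"
| sc_times: "aeq (Times (Sc c) (Sc d)) (Sc (c * d))"
| sc_central: "aeq (Times (Sc c) a) (Times a (Sc c))"

primrec subst :: "(gen \<Rightarrow> aexp) \<Rightarrow> aexp \<Rightarrow> aexp" where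
  "subst f (Gen g) = f g"
| "subst f (Sc c) = Sc c"
| "subst f (Plus a b) = Plus (subst f a) (subst f b)"
| "subst f (Times a b) = Times (subst f a) (subst f b)"

fun img :: "nat \<Rightarrow> gen \<Rightarrow> aexp" where
  "img (Suc 0) X = Gen Y"
| "img (Suc 0) Xi = Gen Yi"
| "img (Suc 0) Y = Gen X"
| "img (Suc 0) Yi = Gen Xi"
| "img (Suc 0) (W s t) = Gen (Wi t s)"
| "img (Suc 0) (Wi s t) = Gen (W t s)"
| "img (Suc (Suc 0)) X = Gen Xi"
| "img (Suc (Suc 0)) Xi = Gen X"
| "img (Suc (Suc 0)) Y = Gen Y"
| "img (Suc (Suc 0)) Yi = Gen Yi"
| "img (Suc (Suc 0)) (W s t) = Gen (Wi (1 - s) t)"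
| "img (Suc (Suc 0)) (Wi s t) = Gen (W (1 - s) t)"
| "img (Suc (Suc (Suc 0))) X = Gen Xi"
| "img (Suc (Suc (Suc 0))) Xi = Gen X"
| "img (Suc (Suc (Suc 0))) Y = Times (Gen Xi) (Gen Y)"
| "img (Suc (Suc (Suc 0))) Yi = Times (Gen Yi) (Gen X)"
| "img (Suc (Suc (Suc 0))) (W s t) = Gen (Wi (1 - s - t) t)"
| "img (Suc (Suc (Suc 0))) (Wi s t) = Gen (W (1 - s - t) t)"
| "img (Suc (Suc (Suc (Suc 0)))) X = Gen X"
| "img (Suc (Suc (Suc (Suc 0)))) Xi = Gen Xi"
| "img (Suc (Suc (Suc (Suc 0)))) Y = Gen Yi"
| "img (Suc (Suc (Suc (Suc 0)))) Yi = Gen Y"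
| "img (Suc (Suc (Suc (Suc 0)))) (W s t) = Gen (Wi s (1 - t))"
| "img (Suc (Suc (Suc (Suc 0)))) (Wi s t) = Gen (W s (1 - t))"
| "img (Suc (Suc (Suc (Suc (Suc 0))))) X = Gen Xi"
| "img (Suc (Suc (Suc (Suc (Suc 0))))) Xi = Gen X"
| "img (Suc (Suc (Suc (Suc (Suc 0))))) Y = Gen Yi"
| "img (Suc (Suc (Suc (Suc (Suc 0))))) Yi = Gen Y"
| "img (Suc (Suc (Suc (Suc (Suc 0))))) (W s t) = Gen (W (1 - s) (1 - t))"
| "img (Suc (Suc (Suc (Suc (Suc 0))))) (Wi s t) = Gen (Wi (1 - s) (1 - t))"
| "img (Suc (Suc (Suc (Suc (Suc (Suc 0)))))) X = Times (Gen Yi) (Gen X)"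
| "img (Suc (Suc (Suc (Suc (Suc (Suc 0)))))) Xi = Times (Gen Xi) (Gen Y)"
| "img (Suc (Suc (Suc (Suc (Suc (Suc 0)))))) Y = Gen Yi"
| "img (Suc (Suc (Suc (Suc (Suc (Suc 0)))))) Yi = Gen Y"
| "img (Suc (Suc (Suc (Suc (Suc (Suc 0)))))) (W s t) = Gen (Wi s (1 - s - t))"
| "img (Suc (Suc (Suc (Suc (Suc (Suc 0)))))) (Wi s t) = Gen (W s (1 - s - t))"
| "img _ g = Gen g"

end

theory Submission
  imports Defs
begin

lemma aeq_equivp: "equivp aeq"
  by (rule equivpI) (auto simp: reflp_def symp_def transp_def intro: aeq.intros)
quotient_type A = aexp / aeq by (rule aeq_equivp)

instantiation A :: monoid_mult begin
lift_definition times_A :: "A \<Rightarrow> A \<Rightarrow> A" is Times by (rule aeq.times_cong)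
lift_definition one_A :: A is "Sc 1" .
instance proof
  fix a b c :: A
  show "a * b * c = a * (b * c)" by transfer (rule aeq.sym, rule aeq.times_assoc)
  show "1 * a = a" by transfer (rule aeq.times_one_l)
  show "a * 1 = a" by transfer (rule aeq.times_one_r)
qed
end

lift_definition G :: "gen \<Rightarrow> A" is Gen .

lemma abs_Times: "abs_A (Times a b) = abs_A a * abs_A b"
  by (simp add: times_A.abs_eq)
lemma abs_Gen: "abs_A (Gen g) = G g" by (simp add: G.abs_eq)
lemma abs_one: "abs_A (Sc 1) = 1" by (simp add: one_A.abs_eq)

lemma relA: "defrel a b \<Longrightarrow> abs_A a = abs_A b"
  by (simp add: A.abs_eq_iff aeq.rel)

abbreviation "x \<equiv> G X"
abbreviation "xi \<equiv> G Xi"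
abbreviation "y \<equiv> G Y"
abbreviation "yi \<equiv> G Yi"
abbreviation "w s t \<equiv> G (W s t)"
abbreviation "wi s t \<equiv> G (Wi s t)"

lemma zv: "(a::A) * b = c \<Longrightarrow> a * (b * z) = c * z"
  by (metis mult.assoc)

lemma b_xxi: "x * xi = 1" using relA[OF defrel.r_xxi] by (simp add: abs_Times abs_Gen abs_one)
lemma b_xix: "xi * x = 1" using relA[OF defrel.r_xix] by (simp add: abs_Times abs_Gen abs_one)
lemma b_yyi: "y * yi = 1" using relA[OF defrel.r_yyi] by (simp add: abs_Times abs_Gen abs_one)
lemma b_yiy: "yi * y = 1" using relA[OF defrel.r_yiy] by (simp add: abs_Times abs_Gen abs_one)
lemma b_wwi: "w s t * wi s t = 1" using relA[OF defrel.r_wwi] by (simp add: abs_Times abs_Gen abs_one)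
lemma b_wiw: "wi s t * w s t = 1" using relA[OF defrel.r_wiw] by (simp add: abs_Times abs_Gen abs_one)
lemma b_ww: "w s t * w s' t' = w s' t' * w s t" using relA[OF defrel.r_wcomm] by (simp add: abs_Times abs_Gen)
lemma b_yx: "y * x = w 1 1 * (x * y)" using relA[OF defrel.r_yx] by (simp add: abs_Times abs_Gen)
lemma b_xw: "x * w s t = w (s+1) t * x" using relA[OF defrel.r_xw] by (simp add: abs_Times abs_Gen)
lemma b_yw: "y * w s t = w s (t+1) * y" using relA[OF defrel.r_yw] by (simp add: abs_Times abs_Gen)

lemma inv_swap: "(a::A) * ai = 1 \<Longrightarrow> ai * a = 1 \<Longrightarrow> a * b = c * a \<Longrightarrow> b * ai = ai * c"
proof -
  assume h: "a * ai = 1" "ai * a = 1" "a * b = c * a"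
  have "b * ai = (ai * a) * b * ai" using h by simp
  also have "\<dots> = ai * (a * b) * ai" by (simp add: mult.assoc)
  also have "\<dots> = ai * c * (a * ai)" using h by (simp add: mult.assoc)
  also have "\<dots> = ai * c" using h by simp
  finally show ?thesis .
qed

lemma conj_inv: "(a::A) * ai = 1 \<Longrightarrow> ai * a = 1 \<Longrightarrow> b * bi = 1 \<Longrightarrow> bi * b = 1 \<Longrightarrow> a * b = c * a \<Longrightarrow> c * ci = 1 \<Longrightarrow> ci * c = 1 \<Longrightarrow> a * bi = ci * a"
proof -
  assume h: "a * ai = 1" "ai * a = 1" "b * bi = 1" "bi * b = 1" "a * b = c * a" "c * ci = 1" "ci * c = 1"
  have "a * bi = (ci * c) * a * bi" using h by simp
  also have "\<dots> = ci * (c * a) * bi" by (simp add: mult.assoc)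
  also have "\<dots> = ci * (a * b) * bi" using h(5) by simp
  also have "\<dots> = ci * a * (b * bi)" by (simp add: mult.assoc)
  also have "\<dots> = ci * a" using h by simp
  finally show ?thesis .
qed

lemma d_xiw: "xi * w s t = w (s-1) t * xi"
  using inv_swap[OF b_xxi b_xix, of "w (s-1) t" "w s t"] b_xw[of "s-1" t] by simp
lemma d_yiw: "yi * w s t = w s (t-1) * yi"
  using inv_swap[OF b_yyi b_yiy, of "w s (t-1)" "w s t"] b_yw[of s "t-1"] by simp
lemma d_xwi: "x * wi s t = wi (s+1) t * x"
  by (rule conj_inv[OF b_xxi b_xix b_wwi b_wiw b_xw b_wwi b_wiw])
lemma d_ywi: "y * wi s t = wi s (t+1) * y"
  by (rule conj_inv[OF b_yyi b_yiy b_wwi b_wiw b_yw b_wwi b_wiw])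
lemma d_xiwi: "xi * wi s t = wi (s-1) t * xi"
  by (rule conj_inv[OF b_xix b_xxi b_wwi b_wiw d_xiw b_wwi b_wiw])
lemma d_yiwi: "yi * wi s t = wi s (t-1) * yi"
  by (rule conj_inv[OF b_yiy b_yyi b_wwi b_wiw d_yiw b_wwi b_wiw])
lemma d_wwi: "w s t * wi s' t' = wi s' t' * w s t"
  by (rule conj_inv[OF b_wwi b_wiw b_wwi b_wiw b_ww b_wwi b_wiw])
lemma d_wiw: "wi s t * w s' t' = w s' t' * wi s t"
  by (rule d_wwi[symmetric])
lemma d_wiwi: "wi s t * wi s' t' = wi s' t' * wi s t"
  by (rule conj_inv[OF b_wiw b_wwi b_wwi b_wiw d_wiw b_wwi b_wiw])

lemma zv1: "(a::A) * b = 1 \<Longrightarrow> a * (b * z) = z"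
  by (metis mult.assoc mult_1_left)

lemmas R0 = b_xxi b_xix b_yyi b_yiy b_wwi b_wiw
  zv1[OF b_xxi] zv1[OF b_xix] zv1[OF b_yyi] zv1[OF b_yiy] zv1[OF b_wwi] zv1[OF b_wiw]
lemmas R1 = b_ww d_wiwi d_wiw b_xw d_xwi d_xiw d_xiwi b_yw d_ywi d_yiw d_yiwi b_yx
lemmas R1z = R1[THEN zv, simplified mult.assoc]
lemmas R = R0 R1 R1z mult.assoc

lemma c_xy: "x * y = wi 1 1 * (y * x)" by (simp add: R)
lemma c_yxi: "y * xi = wi 0 1 * (xi * y)"
proof -
  have "y * xi = xi * (wi 1 1 * y)" by (rule inv_swap[OF b_xxi b_xix]) (simp add: c_xy mult.assoc)
  then show ?thesis by (simp add: R)
qed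
lemma c_xyi: "x * yi = w 1 0 * (yi * x)"
proof -
  have "x * yi = yi * (w 1 1 * x)" by (rule inv_swap[OF b_yyi b_yiy]) (simp add: b_yx mult.assoc)
  then show ?thesis by (simp add: R)
qed
lemma c_yix: "yi * x = wi 1 0 * (x * yi)" by (simp add: c_xyi R)
lemma c_xiyi: "xi * yi = wi 0 0 * (yi * xi)"
proof -
  have "xi * yi = yi * (wi 0 1 * xi)" by (rule inv_swap[OF b_yyi b_yiy]) (simp add: c_yxi mult.assoc)
  then show ?thesis by (simp add: R)
qed
lemma c_yixi: "yi * xi = w 0 0 * (xi * yi)" by (simp add: c_xiyi R)

lemmas S1 = R1 c_yxi c_yix c_yixi
lemmas S = R0 S1 S1[THEN zv, simplified mult.assoc] mult.assoc

lemma k6: "k \<in> {1..6::nat} \<Longrightarrow> k = Suc 0 \<or> k = Suc (Suc 0) \<or> k = Suc (Suc (Suc 0)) \<or>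
  k = Suc (Suc (Suc (Suc 0))) \<or> k = Suc (Suc (Suc (Suc (Suc 0)))) \<or> k = Suc (Suc (Suc (Suc (Suc (Suc 0)))))"
  by auto

lemma part1: "k \<in> {1..6::nat} \<Longrightarrow> defrel l r \<Longrightarrow> abs_A (subst (img k) l) = abs_A (subst (img k) r)"
  apply (drule k6)
  apply (elim disjE; erule defrel.cases; simp add: abs_Times abs_Gen abs_one S)
  done

lemma part_inv: "k \<in> {1..6::nat} \<Longrightarrow> abs_A (subst (img k) (img k g)) = G g"
  apply (drule k6)
  apply (elim disjE; cases g; simp add: abs_Times abs_Gen abs_one S)
  done


lemma subst_cong:
  assumes h: "\<And>l r. defrel l r \<Longrightarrow> aeq (subst f l) (subst f r)" and e: "aeq a b"
  shows "aeq (subst f a) (subst f b)"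
  using e by (induction rule: aeq.induct) (auto intro: aeq.intros h)

theorem lemma1:
  fixes k :: nat
  assumes "k \<in> {1..6}"
  shows "(\<forall>l r. defrel l r \<longrightarrow> aeq (subst (img k) l) (subst (img k) r))
    \<and> (\<forall>a b. aeq a b \<longrightarrow> aeq (subst (img k) a) (subst (img k) b))
    \<and> (\<forall>a. aeq (subst (img k) (subst (img k) a)) a)
    \<and> (\<forall>a b. aeq (subst (img k) a) (subst (img k) b) \<longrightarrow> aeq a b)
    \<and> (\<forall>b. \<exists>a. aeq (subst (img k) a) b)"
proof -
  have P1: "\<And>l r. defrel l r \<Longrightarrow> aeq (subst (img k) l) (subst (img k) r)"
    using part1[OF assms] by (simp add: A.abs_eq_iff[symmetric])
  have P2: "\<And>a b. aeq a b \<Longrightarrow> aeq (subst (img k) a) (subst (img k) b)"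
    by (rule subst_cong[OF P1])
  have P3: "aeq (subst (img k) (subst (img k) a)) a" for a
  proof (induction a)
    case (Gen g)
    have "abs_A (subst (img k) (img k g)) = abs_A (Gen g)"
      using part_inv[OF assms] by (simp add: abs_Gen)
    then show ?case by (simp add: A.abs_eq_iff)
  qed (auto intro: aeq.intros)
  have P4: "\<And>a b. aeq (subst (img k) a) (subst (img k) b) \<Longrightarrow> aeq a b"
    by (meson P2 P3 aeq.sym aeq.trans)
  show ?thesis using P1 P2 P3 P4 by blast
qed

end
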